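(* The syntactic pomset automaton $A_\Sigma$ is bounded.
   Context: Fix a finite alphabet $\Sigma$. The set $\mathcal{T}$ of sr-expressions is generated by $e, f ::= 0 \mid 1 \mid \mathtt{a}\in\Sigma \mid e+f \mid e\cdot f \mid e\parallel f \mid e^*$. $\mathcal{F}\subseteq\mathcal{T}$ is the smallest set with $1\in\mathcal{F}$; $e+f\in\mathcal{F}$ if $e\in\mathcal{F}$ or $f\in\mathcal{F}$; $e\cdot f, e\parallel f\in\mathcal{F}$ if $e,f\in\mathcal{F}$; and $e^*\in\mathcal{F}$ for all $e$. A pomset automaton (PA) is a tuple $\langle Q,F,\delta,\gamma\rangle$ with states $Q$, accepting states $F\subseteq Q$, $\delta: Q\times\Sigma\to 2^Q$ and $\gamma: Q\times\mathbb{M}(Q)\to 2^Q$ (with $\mathbb{M}(Q)$ the finite multisets over $Q$), such that for each $q$ only finitely many $\phi$ have $\gamma(q,\phi)\neq\emptyset$. The support relation $\preceq$ is the smallest preorder on $Q$ with $q'\preceq q$ whenever $q'\in\delta(q,\mathtt a)$ for some $\mathtt a$, or $q'\in\gamma(q,\phi)$ for some $\phi$, or $q'\in\phi$ for some $\phi$ with $\gamma(q,\phi)\neq\emptyset$. A set $Q'\subseteq Q$ is support-closed if $q\in Q'$ and $q'\preceq q$ imply $q'\in Q'$; the support of $q$ is the smallest support-closed set containing $q$. The PA is bounded if the support of every state is finite. For $e\in\mathcal{T}$ and $T\subseteq\mathcal{T}$, let $e\star T = T$ if $e\in\mathcal{F}$ and $\emptyset$ otherwise. The derivatives $\delta_\Sigma:\mathcal{T}\times\Sigma\to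 2^{\mathcal{T}}$ and $\gamma_\Sigma:\mathcal{T}\times\mathbb{M}(\mathcal{T})\to 2^{\mathcal{T}}$ are defined by: $\delta_\Sigma(0,\mathtt a)=\delta_\Sigma(1,\mathtt a)=\emptyset$; $\delta_\Sigma(\mathtt b,\mathtt a)=\{1 : \mathtt a=\mathtt b\}$; $\delta_\Sigma(e+f,\mathtt a)=\delta_\Sigma(e,\mathtt a)\cup\delta_\Sigma(f,\mathtt a)$; $\delta_\Sigma(e\cdot f,\mathtt a)=\{g\cdot f : g\in\delta_\Sigma(e,\mathtt a)\}\cup e\star\delta_\Sigma(f,\mathtt a)$; $\delta_\Sigma(e\parallel f,\mathtt a)=\emptyset$; $\delta_\Sigma(e^*,\mathtt a)=\{g\cdot e^* : g\in\delta_\Sigma(e,\mathtt a)\}$; and $\gamma_\Sigma(0,\phi)=\gamma_\Sigma(1,\phi)=\gamma_\Sigma(\mathtt b,\phi)=\emptyset$; $\gamma_\Sigma(e+f,\phi)=\gamma_\Sigma(e,\phi)\cup\gamma_\Sigma(f,\phi)$; $\gamma_\Sigma(e\cdot f,\phi)=\{g\cdot f: g\in\gamma_\Sigma(e,\phi)\}\cup e\star\gamma_\Sigma(f,\phi)$; $\gamma_\Sigma(e\parallel f,\phi)=\{1 : \phi=\{\!\{e,f\}\!\}\}$; $\gamma_\Sigma(e^*,\phi)=\{g\cdot e^* : g\in\gamma_\Sigma(e,\phi)\}$. The syntactic PA is $A_\Sigma=\langle\mathcal{T},\mathcal{F},\delta_\Sigma,\gamma_\Sigma\rangle$. *)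

theory Defs
  imports Main "HOL-Library.Multiset"
begin

datatype 'a srexp =
    Zero
  | One
  | Sym 'a
  | Plus "'a srexp" "'a srexp"
  | Seq "'a srexp" "'a srexp"
  | Par "'a srexp" "'a srexp"
  | Star "'a srexp"

text \<open>The set F of expressions (accepting states of the syntactic PA).\<close>
inductive_set Fset :: "'a srexp set" where
  F_one: "One \<in> Fset"
| F_plus_l: "e \<in> Fset \<Longrightarrow> Plus e f \<in> Fset"
| F_plus_r: "f \<in> Fset \<Longrightarrow> Plus e f \<in> Fset"
| F_seq: "e \<in> Fset \<Longrightarrow> f \<in> Fset \<Longrightarrow> Seq e f \<in> Fset"
| F_par: "e \<in> Fset \<Longrightarrow> f \<in> Fset \<Longrightarrow> Par e f \<in> Fset"
| F_star: "Star e \<in> Fset"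

definition fstar :: "'a srexp \<Rightarrow> 'a srexp set \<Rightarrow> 'a srexp set" where
  "fstar e T = (if e \<in> Fset then T else {})"

fun delta_S :: "'a srexp \<Rightarrow> 'a \<Rightarrow> 'a srexp set" where
  "delta_S Zero a = {}"
| "delta_S One a = {}"
| "delta_S (Sym b) a = (if a = b then {One} else {})"
| "delta_S (Plus e f) a = delta_S e a \<union> delta_S f a"
| "delta_S (Seq e f) a = {Seq g f | g. g \<in> delta_S e a} \<union> fstar e (delta_S f a)"
| "delta_S (Par e f) a = {}"
| "delta_S (Star e) a = {Seq g (Star e) | g. g \<in> delta_S e a}"

fun gamma_S :: "'a srexp \<Rightarrow> 'a srexp multiset \<Rightarrow> 'a srexp set" where
  "gamma_S Zero \<phi> = {}"
| "gamma_S One \<phi> = {}"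
| "gamma_S (Sym b) \<phi> = {}"
| "gamma_S (Plus e f) \<phi> = gamma_S e \<phi> \<union> gamma_S f \<phi>"
| "gamma_S (Seq e f) \<phi> = {Seq g f | g. g \<in> gamma_S e \<phi>} \<union> fstar e (gamma_S f \<phi>)"
| "gamma_S (Par e f) \<phi> = (if \<phi> = {#e, f#} then {One} else {})"
| "gamma_S (Star e) \<phi> = {Seq g (Star e) | g. g \<in> gamma_S e \<phi>}"

section \<open>Pomset automata (state set = UNIV of the state type)\<close>

definition supp_step ::
  "('q \<Rightarrow> 'a \<Rightarrow> 'q set) \<Rightarrow> ('q \<Rightarrow> 'q multiset \<Rightarrow> 'q set) \<Rightarrow> 'q \<Rightarrow> 'q \<Rightarrow> bool" where
  "supp_step \<delta> \<gamma> q' q \<longleftrightarrow>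
     (\<exists>a. q' \<in> \<delta> q a) \<or> (\<exists>\<phi>. q' \<in> \<gamma> q \<phi>) \<or> (\<exists>\<phi>. q' \<in># \<phi> \<and> \<gamma> q \<phi> \<noteq> {})"

definition supports ::
  "('q \<Rightarrow> 'a \<Rightarrow> 'q set) \<Rightarrow> ('q \<Rightarrow> 'q multiset \<Rightarrow> 'q set) \<Rightarrow> 'q \<Rightarrow> 'q \<Rightarrow> bool" where
  "supports \<delta> \<gamma> = (supp_step \<delta> \<gamma>)\<^sup>*\<^sup>*"

definition support_closed ::
  "('q \<Rightarrow> 'a \<Rightarrow> 'q set) \<Rightarrow> ('q \<Rightarrow> 'q multiset \<Rightarrow> 'q set) \<Rightarrow> 'q set \<Rightarrow> bool" where
  "support_closed \<delta> \<gamma> S \<longleftrightarrow> (\<forall>q q'. q \<in> S \<longrightarrow> supports \<delta> \<gamma> q' q \<longrightarrow> q' \<in> S)"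

definition support_of ::
  "('q \<Rightarrow> 'a \<Rightarrow> 'q set) \<Rightarrow> ('q \<Rightarrow> 'q multiset \<Rightarrow> 'q set) \<Rightarrow> 'q \<Rightarrow> 'q set" where
  "support_of \<delta> \<gamma> q = \<Inter> {S. support_closed \<delta> \<gamma> S \<and> q \<in> S}"

definition bounded_PA ::
  "('q \<Rightarrow> 'a \<Rightarrow> 'q set) \<Rightarrow> ('q \<Rightarrow> 'q multiset \<Rightarrow> 'q set) \<Rightarrow> bool" where
  "bounded_PA \<delta> \<gamma> \<longleftrightarrow> (\<forall>q. finite (support_of \<delta> \<gamma> q))"

end

theory Submission
  imports Defs
begin

fun Cl :: "'a srexp \<Rightarrow> 'a srexp set" where
  "Cl Zero = {Zero}"
| "Cl One = {One}"
| "Cl (Sym a) = {Sym a, One}"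
| "Cl (Plus e f) = {Plus e f} \<union> Cl e \<union> Cl f"
| "Cl (Seq e f) = {Seq h f | h. h \<in> Cl e} \<union> Cl e \<union> Cl f"
| "Cl (Par e f) = {Par e f, One} \<union> Cl e \<union> Cl f"
| "Cl (Star e) = {Star e} \<union> {Seq h (Star e) | h. h \<in> Cl e} \<union> Cl e"

lemma Cl_self: "e \<in> Cl e"
  by (induction e) auto

lemma Cl_finite: "finite (Cl e)"
proof (induction e)
  case (Seq e f)
  have "{Seq h f | h. h \<in> Cl e} = (\<lambda>h. Seq h f) ` Cl e" by auto
  then show ?case using Seq by simp
next
  case (Star e)
  have "{Seq h (Star e) | h. h \<in> Cl e} = (\<lambda>h. Seq h (Star e)) ` Cl e" by auto
  then show ?case using Star by simp
qed auto

abbreviation S :: "'a srexp \<Rightarrow> 'a srexp \<Rightarrow> bool" where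
  "S \<equiv> supp_step delta_S gamma_S"

lemma S_Zero: "\<not> S g Zero" by (simp add: supp_step_def)
lemma S_One: "\<not> S g One" by (simp add: supp_step_def)
lemma S_Sym: "S g (Sym a) \<Longrightarrow> g = One" by (auto simp: supp_step_def split: if_splits)
lemma S_Plus: "S g (Plus e f) \<Longrightarrow> S g e \<or> S g f" by (auto simp: supp_step_def)
lemma S_Par: "S g (Par e f) \<Longrightarrow> g = One \<or> g = e \<or> g = f"
  by (auto simp: supp_step_def split: if_splits)
lemma S_Seq: "S g (Seq e f) \<Longrightarrow> (\<exists>h. g = Seq h f \<and> S h e) \<or> S g e \<or> S g f"
  by (auto simp: supp_step_def fstar_def split: if_splits)
lemma S_Star: "S g (Star e) \<Longrightarrow> (\<exists>h. g = Seq h (Star e) \<and> S h e) \<or> S g e"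
  by (auto simp: supp_step_def)

lemma Cl_closed: "g \<in> Cl e \<Longrightarrow> S g' g \<Longrightarrow> g' \<in> Cl e"
proof (induction e arbitrary: g g')
  case Zero then show ?case using S_Zero by auto
next
  case One then show ?case using S_One by auto
next
  case (Sym a) then show ?case using S_One S_Sym by fastforce
next
  case (Plus e f)
  show ?case
  proof (cases "g = Plus e f")
    case True
    then have "S g' e \<or> S g' f" using S_Plus Plus.prems(2) by blast
    then show ?thesis using Plus.IH Cl_self by fastforce
  next
    case False then show ?thesis using Plus by auto
  qed
next
  case (Par e f)
  show ?case
  proof (cases "g = Par e f")
    case True
    then have "g' = One \<or> g' = e \<or> g' = f" using S_Par Par.prems(2) by blast
    then show ?thesis using Cl_self by auto
  next
    case False then show ?thesis using Par.prems Par.IH S_One by auto blast+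
  qed
next
  case (Seq e f)
  from Seq.prems(1) consider h where "g = Seq h f" "h \<in> Cl e" | "g \<in> Cl e" | "g \<in> Cl f" by auto
  then show ?case
  proof cases
    case 1
    then have "(\<exists>h'. g' = Seq h' f \<and> S h' h) \<or> S g' h \<or> S g' f"
      using Seq.prems(2) S_Seq[of g' h f] by blast
    moreover have "S g' f \<Longrightarrow> g' \<in> Cl f" using Seq.IH(2) Cl_self by blast
    moreover have "S g' h \<Longrightarrow> g' \<in> Cl e" using Seq.IH(1) 1 by blast
    moreover have "S h' h \<Longrightarrow> h' \<in> Cl e" for h' using Seq.IH(1) 1 by blast
    ultimately show ?thesis by auto
  next
    case 2 with Seq show ?thesis by auto
  next
    case 3 with Seq show ?thesis by auto
  qed
next
  case (Star e)
  have st: "g' \<in> Cl (Star e)" if "S g' (Star e)" for g'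
    using S_Star[OF that] Star.IH Cl_self by auto
  from Star.prems(1) consider "g = Star e" | h where "g = Seq h (Star e)" "h \<in> Cl e" | "g \<in> Cl e" by auto
  then show ?case
  proof cases
    case 1 with st Star.prems show ?thesis by auto
  next
    case 2
    then have "(\<exists>h'. g' = Seq h' (Star e) \<and> S h' h) \<or> S g' h \<or> S g' (Star e)"
      using Star.prems(2) S_Seq[of g' h "Star e"] by blast
    moreover have "S g' h \<Longrightarrow> g' \<in> Cl e" using Star.IH 2 by blast
    moreover have "S h' h \<Longrightarrow> h' \<in> Cl e" for h' using Star.IH 2 by blast
    ultimately show ?thesis using st by auto
  next
    case 3 with Star show ?thesis by auto
  qed
qed

lemma Cl_closed_rt: "supports delta_S gamma_S g' g \<Longrightarrow> g \<in> Cl e \<Longrightarrow> g' \<in> Cl e"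
  unfolding supports_def
  by (induction rule: converse_rtranclp_induct) (auto intro: Cl_closed)

theorem lemma7p15:
  shows "bounded_PA (delta_S :: 'a::finite srexp \<Rightarrow> 'a \<Rightarrow> 'a srexp set) gamma_S"
  unfolding bounded_PA_def
proof
  fix q :: "'a srexp"
  have "support_closed delta_S gamma_S (Cl q)"
    unfolding support_closed_def using Cl_closed_rt by blast
  then have "support_of delta_S gamma_S q \<subseteq> Cl q"
    unfolding support_of_def using Cl_self by blast
  then show "finite (support_of delta_S gamma_S q)"
    using Cl_finite finite_subset by blast
qed

end
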